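(* Assume $h_0$ satisfies Case I or Case II. Let $\eta_0>0$, $\eta_1\in\mathbb{R}$, and let $\eta$ be the solution of $\eta''=G(\eta,\eta')$, $\eta(0)=\eta_0$, $\eta'(0)=\eta_1$ on its maximal interval $[0,T[$. Let $V_1=\sup_{x\in\Omega}\{-\frac{\partial h_0}{\partial x_1}(x)\}$ and $V_2=\max\{\eta_1+1,V_1\}$. Then $\eta'(t)<V_2$ for all $t\in[0,T[$.
   Context: Let $\Omega\subset\mathbb{R}^2$ be a bounded open set with regular boundary and $0\in\Omega$. Let $h_0\in C^1(\bar\Omega)$ with $h_0\ge 0$ and $\min_{\Omega}h_0=h_0(0)=0$. Let $F>0$, $K=\{\varphi\in H^1_0(\Omega):\varphi\ge 0\}$. For $\beta>0$, $\gamma\in\mathbb{R}$, let $q\in K$ be the unique solution of $\int_\Omega (h_0+\beta)^3\nabla q\cdot\nabla(\varphi-q)\ge \int_\Omega h_0\,\partial_{x_1}(\varphi-q)-\gamma\int_\Omega(\varphi-q)$ for all $\varphi\in K$, and set $G(\beta,\gamma)=\int_\Omega q\,dx-F$ (locally Lipschitz, so the Cauchy problem has a unique maximal $C^2$ solution with $\eta>0$). Case I (line contact): $h_0(0,x_2)=0$ whenever $(0,x_2)\in\Omega$, $h_0(x_1,x_2)>0$ for $x_1\neq0$, and there exist $\alpha\ge1$, a neighborhood $W$ of $0$ and a regular function $h_1>0$ on $\bar W$ with $h_0=|x_1|^\alpha h_1$ on $W$. Case II (point contact): $h_0(x)>0$ for $x\neq0$, and there exist $\alpha\ge1$, a neighborhood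 $W$ of $0$ and a regular $h_1>0$ on $\bar W$ with $h_0(x)=|x|^\alpha h_1(x)$ on $W$. *)

theory Defs
  imports "HOL-Analysis.Analysis"
begin

(* Points of R^2 are of type real^2; x $ 1 is the coordinate x_1, x $ 2 is x_2. *)

definition C1c :: "(real^2 \<Rightarrow> real) \<Rightarrow> (real^2 \<Rightarrow> real^2) \<Rightarrow> (real^2) set \<Rightarrow> bool" where
  "C1c phi dphi \<Omega> \<longleftrightarrow>
     (\<forall>x. (phi has_derivative (\<lambda>v. dphi x \<bullet> v)) (at x)) \<and> continuous_on UNIV dphi \<and>
     compact (closure {x. phi x \<noteq> 0}) \<and> closure {x. phi x \<noteq> 0} \<subseteq> \<Omega>"

(* u \<in> H^1_0(Omega) with (weak) gradient g: limit in the H^1(Omega) norm of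
   compactly supported C^1 functions (closure of C_c^1(Omega) in H^1). *)
definition H10 :: "(real^2) set \<Rightarrow> (real^2 \<Rightarrow> real) \<Rightarrow> (real^2 \<Rightarrow> real^2) \<Rightarrow> bool" where
  "H10 \<Omega> u g \<longleftrightarrow>
     integrable (lebesgue_on \<Omega>) (\<lambda>x. (u x)\<^sup>2) \<and> u \<in> borel_measurable (lebesgue_on \<Omega>) \<and>
     integrable (lebesgue_on \<Omega>) (\<lambda>x. (norm (g x))\<^sup>2) \<and> g \<in> borel_measurable (lebesgue_on \<Omega>) \<and>
     (\<exists>phi dphi. (\<forall>n. C1c (phi n) (dphi n) \<Omega>) \<and>
        (\<lambda>n. \<integral>x. (phi n x - u x)\<^sup>2 \<partial>lebesgue_on \<Omega>) \<longlonglongrightarrow> 0 \<and>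
        (\<lambda>n. \<integral>x. (norm (dphi n x - g x))\<^sup>2 \<partial>lebesgue_on \<Omega>) \<longlonglongrightarrow> 0)"

definition Kset :: "(real^2) set \<Rightarrow> (real^2 \<Rightarrow> real) \<Rightarrow> (real^2 \<Rightarrow> real^2) \<Rightarrow> bool" where
  "Kset \<Omega> u g \<longleftrightarrow> H10 \<Omega> u g \<and> (AE x in lebesgue_on \<Omega>. u x \<ge> 0)"

definition vi_sol :: "(real^2) set \<Rightarrow> (real^2 \<Rightarrow> real) \<Rightarrow> real \<Rightarrow> real \<Rightarrow>
    (real^2 \<Rightarrow> real) \<Rightarrow> (real^2 \<Rightarrow> real^2) \<Rightarrow> bool" where
  "vi_sol \<Omega> h0 \<beta> \<gamma> q gq \<longleftrightarrow> Kset \<Omega> q gq \<and>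
     (\<forall>phi gphi. Kset \<Omega> phi gphi \<longrightarrow>
        (\<integral>x. (h0 x + \<beta>) ^ 3 * (gq x \<bullet> (gphi x - gq x)) \<partial>lebesgue_on \<Omega>)
        \<ge> (\<integral>x. h0 x * ((gphi x - gq x) $ 1) \<partial>lebesgue_on \<Omega>)
           - \<gamma> * (\<integral>x. phi x - q x \<partial>lebesgue_on \<Omega>))"

definition Gfun :: "(real^2) set \<Rightarrow> (real^2 \<Rightarrow> real) \<Rightarrow> real \<Rightarrow> real \<Rightarrow> real \<Rightarrow> real" where
  "Gfun \<Omega> h0 F \<beta> \<gamma> =
     (THE v. \<exists>q gq. vi_sol \<Omega> h0 \<beta> \<gamma> q gq \<and> v = (\<integral>x. q x \<partial>lebesgue_on \<Omega>) - F)"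

definition regular_boundary :: "(real^2) set \<Rightarrow> bool" where
  "regular_boundary \<Omega> \<longleftrightarrow>
     (\<forall>p\<in>frontier \<Omega>. \<exists>r>0. \<exists>(R::real^2 \<Rightarrow> real^2) f f'. orthogonal_transformation R \<and>
        (\<forall>s. (f has_real_derivative f' s) (at s)) \<and> continuous_on UNIV f' \<and>
        \<Omega> \<inter> ball p r = {x \<in> ball p r. (R (x - p)) $ 2 < f ((R (x - p)) $ 1)})"

definition regular_on :: "(real^2 \<Rightarrow> real) \<Rightarrow> (real^2) set \<Rightarrow> bool" where
  "regular_on h W \<longleftrightarrow> continuous_on (closure W) h \<and>
     (\<exists>D. continuous_on (closure W) D \<and> (\<forall>x\<in>W. (h has_derivative (\<lambda>v. D x \<bullet> v)) (at x)))"

definition caseI :: "(real^2) set \<Rightarrow> (real^2 \<Rightarrow> real) \<Rightarrow> bool" where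
  "caseI \<Omega> h0 \<longleftrightarrow>
     (\<forall>x\<in>\<Omega>. x $ 1 = 0 \<longrightarrow> h0 x = 0) \<and>
     (\<forall>x\<in>closure \<Omega>. x $ 1 \<noteq> 0 \<longrightarrow> h0 x > 0) \<and>
     (\<exists>\<alpha>::real. \<alpha> \<ge> 1 \<and> (\<exists>W h1. open W \<and> 0 \<in> W \<and> W \<subseteq> \<Omega> \<and> regular_on h1 W \<and>
        (\<forall>x\<in>closure W. h1 x > 0) \<and> (\<forall>x\<in>W. h0 x = \<bar>x $ 1\<bar> powr \<alpha> * h1 x)))"

definition caseII :: "(real^2) set \<Rightarrow> (real^2 \<Rightarrow> real) \<Rightarrow> bool" where
  "caseII \<Omega> h0 \<longleftrightarrow>
     (\<forall>x\<in>closure \<Omega>. x \<noteq> 0 \<longrightarrow> h0 x > 0) \<and>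
     (\<exists>\<alpha>::real. \<alpha> \<ge> 1 \<and> (\<exists>W h1. open W \<and> 0 \<in> W \<and> W \<subseteq> \<Omega> \<and> regular_on h1 W \<and>
        (\<forall>x\<in>closure W. h1 x > 0) \<and> (\<forall>x\<in>W. h0 x = norm x powr \<alpha> * h1 x)))"

definition Ival :: "ereal \<Rightarrow> real set" where
  "Ival T = {t. 0 \<le> t \<and> ereal t < T}"

(* eta is a C^2 solution on [0,T[ of eta'' = G(eta, eta'), eta(0)=eta0, eta'(0)=eta1, eta > 0;
   d1, d2 are its first and second derivatives (one-sided at 0) *)
definition ode_sol :: "(real \<Rightarrow> real \<Rightarrow> real) \<Rightarrow> real \<Rightarrow> real \<Rightarrow> ereal \<Rightarrow>
    (real \<Rightarrow> real) \<Rightarrow> (real \<Rightarrow> real) \<Rightarrow> (real \<Rightarrow> real) \<Rightarrow> bool" where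
  "ode_sol G eta0 eta1 T eta d1 d2 \<longleftrightarrow> T > 0 \<and> eta 0 = eta0 \<and> d1 0 = eta1 \<and>
     continuous_on (Ival T) d2 \<and>
     (\<forall>t\<in>Ival T. (eta has_real_derivative d1 t) (at t within Ival T) \<and>
                 (d1 has_real_derivative d2 t) (at t within Ival T) \<and>
                 eta t > 0 \<and> d2 t = G (eta t) (d1 t))"

definition maximal_ode_sol :: "(real \<Rightarrow> real \<Rightarrow> real) \<Rightarrow> real \<Rightarrow> real \<Rightarrow> ereal \<Rightarrow>
    (real \<Rightarrow> real) \<Rightarrow> (real \<Rightarrow> real) \<Rightarrow> (real \<Rightarrow> real) \<Rightarrow> bool" where
  "maximal_ode_sol G eta0 eta1 T eta d1 d2 \<longleftrightarrow> ode_sol G eta0 eta1 T eta d1 d2 \<and>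
     (\<forall>T' z z1 z2. ode_sol G eta0 eta1 T' z z1 z2 \<longrightarrow> T' \<le> T)"

end

theory Submission
  imports Defs
begin


lemma ibp_line:
  fixes f g :: "'a::euclidean_space \<Rightarrow> real" and v :: 'a and K :: "'a set"
  assumes der: "\<And>x t. ((\<lambda>s. f (x + s *\<^sub>R v)) has_real_derivative g (x + t *\<^sub>R v)) (at t)"
    and cf: "continuous_on UNIV f" and cg: "continuous_on UNIV g"
    and K: "compact K" and fK: "\<And>x. x \<notin> K \<Longrightarrow> f x = 0" and gK: "\<And>x. x \<notin> K \<Longrightarrow> g x = 0"
  shows "integral\<^sup>L lborel g = 0"
proof -
  obtain R where R0: "R > 0" and RK: "\<And>x. x \<in> K \<Longrightarrow> norm x \<le> R"
    using compact_imp_bounded[OF K] bounded_pos by blast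
  have R: "K \<subseteq> cball 0 R" "0 \<le> R" using R0 RK by auto
  define C where "C = cball (0::'a) (R + norm v)"
  have "compact (g ` K)" using K continuous_on_subset[OF cg] by (intro compact_continuous_image) auto
  then have "bounded (g ` K)" by (rule compact_imp_bounded)
  then obtain Bg where Bg0: "\<And>y. y \<in> g ` K \<Longrightarrow> norm y \<le> Bg" unfolding bounded_iff by blast
  have Bg: "\<bar>g x\<bar> \<le> max Bg 0" for x using Bg0[of "g x"] gK[of x] by (cases "x \<in> K") auto
  have fm: "f \<in> borel_measurable borel" using cf by (simp add: borel_measurable_continuous_onI)
  have gm: "g \<in> borel_measurable borel" using cg by (simp add: borel_measurable_continuous_onI)
  have fint: "integrable lborel f"
  proof -
    have "integrable lborel (\<lambda>x. indicator K x *\<^sub>R f x)"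
      by (rule borel_integrable_compact[OF K]) (use cf continuous_on_subset in blast)
    moreover have "(\<lambda>x. indicator K x *\<^sub>R f x) = f" using fK by (auto simp: indicator_def fun_eq_iff)
    ultimately show ?thesis by simp
  qed
  have gint: "integrable lborel g"
  proof -
    have "integrable lborel (\<lambda>x. indicator K x *\<^sub>R g x)"
      by (rule borel_integrable_compact[OF K]) (use cg continuous_on_subset in blast)
    moreover have "(\<lambda>x. indicator K x *\<^sub>R g x) = g" using gK by (auto simp: indicator_def fun_eq_iff)
    ultimately show ?thesis by simp
  qed
  have trans: "integrable lborel (\<lambda>x. f (c + x)) \<and> integral\<^sup>L lborel (\<lambda>x. f (c + x)) = integral\<^sup>L lborel f" for c
  proof -
    have m: "(+) c \<in> measurable lborel borel" by simp
    have "integrable (distr lborel borel ((+) c)) f" using fint by (simp add: lborel_distr_plus)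
    then have i: "integrable lborel (\<lambda>x. f (c + x))" using integrable_distr_eq[OF m fm] by simp
    have "integral\<^sup>L (distr lborel borel ((+) c)) f = integral\<^sup>L lborel (\<lambda>x. f (c + x))"
      by (rule integral_distr[OF m fm])
    then show ?thesis using i by (simp add: lborel_distr_plus)
  qed
  define hh where "hh n = inverse (real (Suc n))" for n
  have hh0: "0 < hh n" "hh n \<le> 1" for n unfolding hh_def by (auto simp: field_simps)
  define s where "s n x = (f (x + hh n *\<^sub>R v) - f x) / hh n" for n x
  have sint: "integral\<^sup>L lborel (s n) = 0" for n
  proof -
    have "integral\<^sup>L lborel (s n) = (integral\<^sup>L lborel (\<lambda>x. f (hh n *\<^sub>R v + x)) - integral\<^sup>L lborel f) / hh n"
      unfolding s_def using trans[of "hh n *\<^sub>R v"] fint by (simp add: add.commute)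
    then show ?thesis using trans[of "hh n *\<^sub>R v"] by simp
  qed
  have "(\<lambda>n. integral\<^sup>L lborel (s n)) \<longlonglongrightarrow> integral\<^sup>L lborel g"
  proof (rule integral_dominated_convergence[where w="\<lambda>x. indicator C x * max Bg 0"])
    show "g \<in> borel_measurable lborel" using gm by simp
    show "s n \<in> borel_measurable lborel" for n unfolding s_def using fm by simp
    have "integrable lborel (\<lambda>x. indicator C x *\<^sub>R max Bg 0)"
      by (rule borel_integrable_compact) (auto simp: C_def)
    then show "integrable lborel (\<lambda>x. indicator C x * max Bg 0)" by simp
    show "AE x in lborel. (\<lambda>n. s n x) \<longlonglongrightarrow> g x"
    proof (intro AE_I2)
      fix x
      have d: "((\<lambda>h. (f (x + h *\<^sub>R v) - f x) / h) \<longlongrightarrow> g x) (at 0)"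
        using der[of x 0] unfolding DERIV_def by simp
      have hhe: "hh = (\<lambda>n. inverse (real (Suc n)))" by (simp add: hh_def fun_eq_iff)
      have "filterlim hh (at 0) sequentially"
        unfolding filterlim_at using hh0 LIMSEQ_inverse_real_of_nat hhe by auto
      from filterlim_compose[OF d this] show "(\<lambda>n. s n x) \<longlonglongrightarrow> g x" by (simp add: s_def o_def)
    qed
    show "AE x in lborel. norm (s n x) \<le> indicator C x * max Bg 0" for n
    proof (intro AE_I2)
      fix x
      show "norm (s n x) \<le> indicator C x * max Bg 0"
      proof (cases "x \<in> C")
        case True
        have "\<exists>z. 0 < z \<and> z < hh n \<and> f (x + hh n *\<^sub>R v) - f (x + 0 *\<^sub>R v) = (hh n - 0) * g (x + z *\<^sub>R v)"
          by (rule MVT2[where f="\<lambda>s. f (x + s *\<^sub>R v)"]) (use hh0 der in auto)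
        then obtain z where z: "f (x + hh n *\<^sub>R v) - f x = hh n * g (x + z *\<^sub>R v)" by auto
        have "s n x = g (x + z *\<^sub>R v)" using z hh0[of n] by (simp add: s_def)
        then show ?thesis using True Bg by simp
      next
        case False
        then have "norm x > R + norm v" by (simp add: C_def)
        then have a: "x \<notin> K" using RK[of x] norm_ge_zero[of v] by force
        have "norm (x + hh n *\<^sub>R v) \<ge> norm x - hh n * norm v"
          using norm_triangle_ineq2[of x "- (hh n *\<^sub>R v)"] hh0[of n] by simp
        moreover have "hh n * norm v \<le> norm v" using hh0[of n] by (simp add: mult_left_le_one_le)
        ultimately have "norm (x + hh n *\<^sub>R v) > R" using \<open>norm x > R + norm v\<close> by linarith
        then have "x + hh n *\<^sub>R v \<notin> K" using RK[of "x + hh n *\<^sub>R v"] by force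
        then show ?thesis using a False fK by (simp add: s_def)
      qed
    qed
  qed
  then show ?thesis using sint by (simp add: LIMSEQ_const_iff)
qed


lemma ibp_omega:
  fixes \<Omega> :: "(real^2) set" and h0 :: "real^2 \<Rightarrow> real" and Dh0 :: "real^2 \<Rightarrow> real^2"
  assumes op: "open \<Omega>" and C: "C1c phi dphi \<Omega>"
    and dh: "\<forall>x\<in>\<Omega>. (h0 has_derivative (\<lambda>v. Dh0 x \<bullet> v)) (at x)"
    and ch: "continuous_on \<Omega> h0" and cD: "continuous_on \<Omega> Dh0"
  shows "integral\<^sup>L (lebesgue_on \<Omega>) (\<lambda>x. h0 x * dphi x $ 1 + Dh0 x $ 1 * phi x) = 0"
proof -
  define S where "S = closure {x. phi x \<noteq> 0}"
  have dphi: "\<And>x. (phi has_derivative (\<lambda>v. dphi x \<bullet> v)) (at x)" and cdphi: "continuous_on UNIV dphi"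
    and S: "compact S" "S \<subseteq> \<Omega>" using C unfolding C1c_def S_def by blast+
  have oS: "open (- S)" using compact_imp_closed[OF S(1)] by (simp add: open_Compl)
  have phi0: "phi x = 0" if "x \<notin> S" for x using that closure_subset[of "{x. phi x \<noteq> 0}"] unfolding S_def by auto
  have dphi0: "dphi x = 0" if "x \<notin> S" for x
  proof -
    have "(phi has_derivative (\<lambda>v. 0)) (at x)"
      by (rule has_derivative_transform_within_open[OF has_derivative_const oS]) (use that phi0 in auto)
    then have "(\<lambda>v. dphi x \<bullet> v) = (\<lambda>v. 0)" by (rule has_derivative_unique[OF dphi])
    then have "dphi x \<bullet> dphi x = 0" using fun_cong[of "\<lambda>v. dphi x \<bullet> v" "\<lambda>v. 0" "dphi x"] by simp
    then show ?thesis by simp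
  qed
  have cphi: "continuous_on UNIV phi"
    by (intro continuous_at_imp_continuous_on ballI has_derivative_continuous[OF dphi])
  define f where "f x = (if x \<in> \<Omega> then h0 x * phi x else 0)" for x
  define Df where "Df x = (if x \<in> \<Omega> then h0 x *\<^sub>R dphi x + phi x *\<^sub>R Dh0 x else 0)" for x
  define g where "g x = Df x \<bullet> axis 1 1" for x
  have f0: "f x = 0" if "x \<notin> S" for x using phi0[OF that] by (simp add: f_def)
  have Df0: "Df x = 0" if "x \<notin> S" for x using phi0[OF that] dphi0[OF that] by (simp add: Df_def)
  have fder: "(f has_derivative (\<lambda>v. Df x \<bullet> v)) (at x)" for x
  proof (cases "x \<in> \<Omega>")
    case True
    have "((\<lambda>y. h0 y * phi y) has_derivative (\<lambda>v. h0 x * (dphi x \<bullet> v) + (Dh0 x \<bullet> v) * phi x)) (at x)"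
      using dh True dphi by (intro has_derivative_mult) auto
    then have "((\<lambda>y. h0 y * phi y) has_derivative (\<lambda>v. Df x \<bullet> v)) (at x)"
      using True by (simp add: Df_def inner_add_left algebra_simps)
    then show ?thesis
      by (rule has_derivative_transform_within_open[OF _ op True]) (simp add: f_def)
  next
    case False
    then have xS: "x \<notin> S" using S by auto
    have "(f has_derivative (\<lambda>v. 0)) (at x)"
      by (rule has_derivative_transform_within_open[OF has_derivative_const oS]) (use xS f0 in auto)
    then show ?thesis using Df0[OF xS] by simp
  qed
  have cf: "continuous_on UNIV f"
    by (intro continuous_at_imp_continuous_on ballI has_derivative_continuous[OF fder])
  have cDf: "continuous_on UNIV Df"
  proof -
    have "continuous_on \<Omega> Df"
    proof (rule continuous_on_eq[where f="\<lambda>x. h0 x *\<^sub>R dphi x + phi x *\<^sub>R Dh0 x"])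
      show "continuous_on \<Omega> (\<lambda>x. h0 x *\<^sub>R dphi x + phi x *\<^sub>R Dh0 x)"
        using ch cD continuous_on_subset[OF cdphi] continuous_on_subset[OF cphi]
        by (intro continuous_intros) auto
    qed (simp add: Df_def)
    moreover have "continuous_on (- S) Df"
      by (rule continuous_on_eq[OF continuous_on_const]) (use Df0 in auto)
    ultimately have "continuous_on (\<Omega> \<union> - S) Df" using continuous_on_open_Un op oS by blast
    moreover have "\<Omega> \<union> - S = UNIV" using S by auto
    ultimately show ?thesis by simp
  qed
  have cg: "continuous_on UNIV g" unfolding g_def by (intro continuous_intros cDf)
  have der: "((\<lambda>s. f (x + s *\<^sub>R axis 1 1)) has_real_derivative g (x + t *\<^sub>R axis 1 1)) (at t)" for x t
  proof -
    have "((\<lambda>s. x + s *\<^sub>R axis 1 1) has_derivative (\<lambda>s. s *\<^sub>R axis 1 1)) (at t)"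
      by (auto intro!: derivative_eq_intros)
    from has_derivative_compose[OF this fder]
    have "((\<lambda>s. f (x + s *\<^sub>R axis 1 1)) has_derivative (\<lambda>s. Df (x + t *\<^sub>R axis 1 1) \<bullet> (s *\<^sub>R axis 1 1))) (at t)"
      by (simp add: o_def)
    then show ?thesis unfolding has_field_derivative_def g_def
      by (rule has_derivative_eq_rhs) (auto simp: fun_eq_iff algebra_simps)
  qed
  have gl: "integral\<^sup>L lborel g = 0"
    by (rule ibp_line[OF der cf cg S(1)]) (use f0 Df0 g_def in auto)
  have Om: "\<Omega> \<in> sets lebesgue" using op by (simp add: borel_open sets_completionI_sets)
  have gm: "g \<in> borel_measurable borel" using cg by (simp add: borel_measurable_continuous_onI)
  have "integral\<^sup>L (lebesgue_on \<Omega>) (\<lambda>x. h0 x * dphi x $ 1 + Dh0 x $ 1 * phi x) = integral\<^sup>L (lebesgue_on \<Omega>) g"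
    by (rule Bochner_Integration.integral_cong) (auto simp: g_def Df_def cart_eq_inner_axis inner_add_left)
  also have "\<dots> = integral\<^sup>L lebesgue (\<lambda>x. indicator \<Omega> x *\<^sub>R g x)"
    by (rule integral_restrict_space) (use Om in simp)
  also have "(\<lambda>x. indicator \<Omega> x *\<^sub>R g x) = g"
    by (auto simp: indicator_def g_def Df_def fun_eq_iff)
  also have "integral\<^sup>L lebesgue g = integral\<^sup>L lborel g"
    by (rule integral_completion) (use gm in simp)
  finally show ?thesis using gl by simp
qed




lemma abs_le_1_sq: "\<bar>w::real\<bar> \<le> 1 + w\<^sup>2"
proof -
  have "0 \<le> (\<bar>w\<bar> - 1)\<^sup>2" by simp
  also have "(\<bar>w\<bar> - 1)\<^sup>2 = w\<^sup>2 + 1 - 2 * \<bar>w\<bar>" by (simp add: power2_diff power2_abs)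
  finally show ?thesis by simp
qed

lemma sq_int:
  fixes w E :: "'a \<Rightarrow> real"
  assumes fm: "finite_measure M" and w: "w \<in> borel_measurable M" and E: "integrable M E"
    and le: "\<And>x. x \<in> space M \<Longrightarrow> (w x)\<^sup>2 \<le> E x"
  shows "integrable M w"
proof (rule Bochner_Integration.integrable_bound[where f="\<lambda>x. 1 + E x"])
  show "integrable M (\<lambda>x. 1 + E x)" by (rule Bochner_Integration.integrable_add[OF finite_measure.integrable_const[OF fm] E])
  show "AE x in M. norm (w x) \<le> norm (1 + E x)"
  proof (intro AE_I2)
    fix x assume "x \<in> space M"
    then have "(w x)\<^sup>2 \<le> E x" by (rule le)
    then show "norm (w x) \<le> norm (1 + E x)" using abs_le_1_sq[of "w x"] by simp
  qed
qed (fact w)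

lemma prod_int:
  fixes f w E :: "'a \<Rightarrow> real"
  assumes fm: "finite_measure M" and f: "f \<in> borel_measurable M" "\<And>x. x \<in> space M \<Longrightarrow> \<bar>f x\<bar> \<le> B"
    and w: "w \<in> borel_measurable M" and E: "integrable M E"
    and le: "\<And>x. x \<in> space M \<Longrightarrow> (w x)\<^sup>2 \<le> E x"
  shows "integrable M (\<lambda>x. f x * w x)"
proof (rule Bochner_Integration.integrable_bound[where f="\<lambda>x. B * w x"])
  show "integrable M (\<lambda>x. B * w x)" using sq_int[OF fm w E le] by simp
  show "AE x in M. norm (f x * w x) \<le> norm (B * w x)"
  proof (intro AE_I2)
    fix x assume "x \<in> space M"
    then have "\<bar>f x\<bar> \<le> B" by (rule f)
    then have "\<bar>f x\<bar> * \<bar>w x\<bar> \<le> B * \<bar>w x\<bar>" by (simp add: mult_right_mono)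
    moreover have "B * \<bar>w x\<bar> \<le> \<bar>B\<bar> * \<bar>w x\<bar>" by (simp add: mult_right_mono)
    ultimately have "\<bar>f x\<bar> * \<bar>w x\<bar> \<le> \<bar>B\<bar> * \<bar>w x\<bar>" by linarith
    then show "norm (f x * w x) \<le> norm (B * w x)" by (simp add: abs_mult)
  qed
qed (use f w in simp)

lemma L2lim:
  fixes f u :: "'a \<Rightarrow> real" and un e :: "nat \<Rightarrow> 'a \<Rightarrow> real"
  assumes fm: "finite_measure M" and f: "f \<in> borel_measurable M" "\<And>x. x \<in> space M \<Longrightarrow> \<bar>f x\<bar> \<le> B"
    and u: "u \<in> borel_measurable M" "integrable M (\<lambda>x. (u x)\<^sup>2)"
    and un: "\<And>n. un n \<in> borel_measurable M"
    and ei: "\<And>n. integrable M (e n)" and ele: "\<And>n x. x \<in> space M \<Longrightarrow> (un n x - u x)\<^sup>2 \<le> e n x"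
    and el: "(\<lambda>n. integral\<^sup>L M (e n)) \<longlonglongrightarrow> 0"
  shows "(\<lambda>n. \<integral>x. f x * un n x \<partial>M) \<longlonglongrightarrow> (\<integral>x. f x * u x \<partial>M)"
proof -
  interpret finite_measure M by (fact fm)
  have wm: "(\<lambda>x. un n x - u x) \<in> borel_measurable M" for n using un u by simp
  have wi: "integrable M (\<lambda>x. un n x - u x)" for n by (rule sq_int[OF fm wm ei ele])
  have fwi: "integrable M (\<lambda>x. f x * (un n x - u x))" for n by (rule prod_int[OF fm f wm ei ele])
  have fui: "integrable M (\<lambda>x. f x * u x)" by (rule prod_int[OF fm f u(1) u(2)]) auto
  have absw: "(\<lambda>n. \<integral>x. \<bar>un n x - u x\<bar> \<partial>M) \<longlonglongrightarrow> 0"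
  proof (rule LIMSEQ_I)
    fix r :: real assume r: "0 < r"
    define \<mu> where "\<mu> = measure M (space M)"
    have mu0: "0 \<le> \<mu>" by (simp add: \<mu>_def)
    define \<epsilon> where "\<epsilon> = r / (2 * (\<mu> + 1))"
    have eps: "0 < \<epsilon>" unfolding \<epsilon>_def using r mu0 by (intro divide_pos_pos) auto
    have "\<epsilon> * r > 0" using eps r by simp
    from LIMSEQ_D[OF el this] obtain N where N: "\<And>n. n \<ge> N \<Longrightarrow> norm (integral\<^sup>L M (e n) - 0) < \<epsilon> * r" by blast
    show "\<exists>no. \<forall>n\<ge>no. norm ((\<integral>x. \<bar>un n x - u x\<bar> \<partial>M) - 0) < r"
    proof (intro exI allI impI)
      fix n assume n: "n \<ge> N"
      have pt: "\<bar>un n x - u x\<bar> \<le> \<epsilon> / 2 + e n x / (2 * \<epsilon>)" if x: "x \<in> space M" for x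
      proof -
        have "0 \<le> (\<bar>un n x - u x\<bar> - \<epsilon>)\<^sup>2" by simp
        then have "2 * \<epsilon> * \<bar>un n x - u x\<bar> \<le> (un n x - u x)\<^sup>2 + \<epsilon>\<^sup>2"
          by (simp add: power2_eq_square algebra_simps)
        also have "\<dots> \<le> e n x + \<epsilon>\<^sup>2" using ele[OF x] by simp
        finally have "2 * \<epsilon> * \<bar>un n x - u x\<bar> \<le> e n x + \<epsilon>\<^sup>2" .
        then show ?thesis using eps by (simp add: field_simps power2_eq_square)
      qed
      have "(\<integral>x. \<bar>un n x - u x\<bar> \<partial>M) \<le> (\<integral>x. \<epsilon> / 2 + e n x / (2 * \<epsilon>) \<partial>M)"
        by (intro Bochner_Integration.integral_mono) (use wi ei pt in auto)
      also have "\<dots> = \<epsilon> / 2 * \<mu> + integral\<^sup>L M (e n) / (2 * \<epsilon>)"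
        using ei by (simp add: \<mu>_def)
      also have "\<dots> < r"
      proof -
        have "integral\<^sup>L M (e n) < \<epsilon> * r" using N[OF n] by simp
        then have a: "integral\<^sup>L M (e n) / (2 * \<epsilon>) < r / 2" using eps by (simp add: field_simps)
        have "\<epsilon> / 2 * \<mu> = r * \<mu> / (4 * (\<mu> + 1))" by (simp add: \<epsilon>_def)
        also have "\<dots> < r / 2"
        proof -
          have "0 < r * 4 + \<mu> * (r * 2)" using r mu0 by (simp add: add_pos_nonneg)
          then show ?thesis using r mu0 by (simp add: field_simps)
        qed
        finally show ?thesis using a by linarith
      qed
      finally have "(\<integral>x. \<bar>un n x - u x\<bar> \<partial>M) < r" .
      moreover have "0 \<le> (\<integral>x. \<bar>un n x - u x\<bar> \<partial>M)" by simp
      ultimately show "norm ((\<integral>x. \<bar>un n x - u x\<bar> \<partial>M) - 0) < r" by simp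
    qed
  qed
  have "(\<lambda>n. (\<integral>x. f x * un n x \<partial>M) - (\<integral>x. f x * u x \<partial>M)) \<longlonglongrightarrow> 0"
  proof (rule Lim_null_comparison)
    show "(\<lambda>n. \<bar>B\<bar> * (\<integral>x. \<bar>un n x - u x\<bar> \<partial>M)) \<longlonglongrightarrow> 0"
      using tendsto_mult_right_zero[OF absw] by simp
    show "\<forall>\<^sub>F n in sequentially. norm ((\<integral>x. f x * un n x \<partial>M) - (\<integral>x. f x * u x \<partial>M)) \<le> \<bar>B\<bar> * (\<integral>x. \<bar>un n x - u x\<bar> \<partial>M)"
    proof (intro always_eventually allI)
      fix n
      have "(\<integral>x. f x * un n x \<partial>M) - (\<integral>x. f x * u x \<partial>M) = (\<integral>x. f x * (un n x - u x) \<partial>M)"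
      proof -
        have "(\<lambda>x. f x * un n x) = (\<lambda>x. f x * (un n x - u x) + f x * u x)" by (simp add: algebra_simps)
        then show ?thesis using fwi[of n] fui by simp
      qed
      also have "\<bar>\<dots>\<bar> \<le> (\<integral>x. \<bar>f x * (un n x - u x)\<bar> \<partial>M)" by (rule integral_abs_bound)
      also have "\<dots> \<le> (\<integral>x. \<bar>B\<bar> * \<bar>un n x - u x\<bar> \<partial>M)"
      proof (intro Bochner_Integration.integral_mono)
        show "integrable M (\<lambda>x. \<bar>f x * (un n x - u x)\<bar>)" using fwi by simp
        show "integrable M (\<lambda>x. \<bar>B\<bar> * \<bar>un n x - u x\<bar>)" using wi by simp
        fix x assume "x \<in> space M"
        then have "\<bar>f x\<bar> \<le> \<bar>B\<bar>" using f(2) by force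
        then show "\<bar>f x * (un n x - u x)\<bar> \<le> \<bar>B\<bar> * \<bar>un n x - u x\<bar>" by (simp add: abs_mult mult_right_mono)
      qed
      also have "\<dots> = \<bar>B\<bar> * (\<integral>x. \<bar>un n x - u x\<bar> \<partial>M)" by simp
      finally show "norm ((\<integral>x. f x * un n x \<partial>M) - (\<integral>x. f x * u x \<partial>M)) \<le> \<bar>B\<bar> * (\<integral>x. \<bar>un n x - u x\<bar> \<partial>M)" by simp
    qed
  qed
  then show ?thesis by (simp add: LIM_zero_iff)
qed




lemma diff_sq_int:
  fixes a b :: "'a \<Rightarrow> 'b::{real_normed_vector, second_countable_topology}"
  assumes fm: "finite_measure M" and a: "a \<in> borel_measurable M" "\<And>x. x \<in> space M \<Longrightarrow> norm (a x) \<le> A"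
    and b: "b \<in> borel_measurable M" "integrable M (\<lambda>x. (norm (b x))\<^sup>2)"
  shows "integrable M (\<lambda>x. (norm (a x - b x))\<^sup>2)"
proof (rule Bochner_Integration.integrable_bound[where f="\<lambda>x. 2 * A\<^sup>2 + 2 * (norm (b x))\<^sup>2"])
  show "integrable M (\<lambda>x. 2 * A\<^sup>2 + 2 * (norm (b x))\<^sup>2)"
    by (intro Bochner_Integration.integrable_add finite_measure.integrable_const[OF fm] integrable_mult_right b(2))
  show "(\<lambda>x. (norm (a x - b x))\<^sup>2) \<in> borel_measurable M" using a b by simp
  show "AE x in M. norm ((norm (a x - b x))\<^sup>2) \<le> norm (2 * A\<^sup>2 + 2 * (norm (b x))\<^sup>2)"
  proof (intro AE_I2)
    fix x assume x: "x \<in> space M"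
    have n: "norm (a x - b x) \<le> norm (a x) + norm (b x)" by (rule norm_triangle_ineq4)
    have "(norm (a x - b x))\<^sup>2 \<le> (norm (a x) + norm (b x))\<^sup>2" using n by (simp add: power_mono)
    also have "\<dots> \<le> 2 * (norm (a x))\<^sup>2 + 2 * (norm (b x))\<^sup>2"
      using sum_squares_bound[of "norm (a x)" "norm (b x)"] by (simp add: power2_eq_square algebra_simps)
    also have "(norm (a x))\<^sup>2 \<le> A\<^sup>2" using a(2)[OF x] by (simp add: power_mono)
    finally show "norm ((norm (a x - b x))\<^sup>2) \<le> norm (2 * A\<^sup>2 + 2 * (norm (b x))\<^sup>2)" by simp
  qed
qed

lemma cont_bdd:
  fixes h :: "real^2 \<Rightarrow> 'b::real_normed_vector"
  assumes "continuous_on (closure \<Omega>) h" "bounded \<Omega>"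
  shows "\<exists>B. \<forall>x\<in>closure \<Omega>. norm (h x) \<le> B"
proof -
  obtain B where "B \<ge> 0" "\<And>x. x \<in> closure \<Omega> \<Longrightarrow> norm (h x) \<le> B"
    using continuous_on_compact_bound[OF compact_closure[THEN iffD2, OF assms(2)] assms(1)] by blast
  then show ?thesis by blast
qed

lemma keyL:
  fixes \<Omega> :: "(real^2) set" and h0 :: "real^2 \<Rightarrow> real" and Dh0 :: "real^2 \<Rightarrow> real^2"
  assumes op: "open \<Omega>" and bd: "bounded \<Omega>"
    and ch: "continuous_on (closure \<Omega>) h0" and cD: "continuous_on (closure \<Omega>) Dh0"
    and dh: "\<forall>x\<in>\<Omega>. (h0 has_derivative (\<lambda>v. Dh0 x \<bullet> v)) (at x)"
    and gam: "\<forall>x\<in>\<Omega>. - (Dh0 x $ 1) \<le> \<gamma>"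
    and K: "Kset \<Omega> p gp"
  shows "(\<integral>x. h0 x * (gp x $ 1) \<partial>lebesgue_on \<Omega>) \<le> \<gamma> * (\<integral>x. p x \<partial>lebesgue_on \<Omega>)"
proof -
  define M where "M = lebesgue_on \<Omega>"
  have Om: "\<Omega> \<in> sets lebesgue" using op by (simp add: borel_open sets_completionI_sets)
  have fm: "finite_measure M" unfolding M_def
    by (rule finite_measure_lebesgue_on[OF bounded_set_imp_lmeasurable[OF bd Om]])
  have sp: "space M = \<Omega>" by (simp add: M_def)
  obtain Bh where Bh: "\<forall>x\<in>closure \<Omega>. norm (h0 x) \<le> Bh" using cont_bdd[OF ch bd] by blast
  obtain BD where BD: "\<forall>x\<in>closure \<Omega>. norm (Dh0 x) \<le> BD" using cont_bdd[OF cD bd] by blast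
  have ch': "continuous_on \<Omega> h0" and cD': "continuous_on \<Omega> Dh0"
    using ch cD continuous_on_subset closure_subset[of \<Omega>] by blast+
  have hm: "h0 \<in> borel_measurable M" unfolding M_def by (rule continuous_imp_measurable_on_sets_lebesgue[OF ch' Om])
  have Dm: "(\<lambda>x. Dh0 x $ 1) \<in> borel_measurable M" unfolding M_def
    by (rule continuous_imp_measurable_on_sets_lebesgue[OF _ Om]) (intro continuous_intros cD')
  have hB: "\<bar>h0 x\<bar> \<le> Bh" if "x \<in> space M" for x using Bh that sp closure_subset[of \<Omega>] by force
  have DB: "\<bar>Dh0 x $ 1\<bar> \<le> BD" if "x \<in> space M" for x
    using BD that sp closure_subset[of \<Omega>] component_le_norm_cart[of "Dh0 x" 1] by force
  from K obtain phin dphin where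
      pi2: "integrable M (\<lambda>x. (p x)\<^sup>2)" and pm: "p \<in> borel_measurable M"
    and gi2: "integrable M (\<lambda>x. (norm (gp x))\<^sup>2)" and gm: "gp \<in> borel_measurable M"
    and C: "\<And>n. C1c (phin n) (dphin n) \<Omega>"
    and l1: "(\<lambda>n. \<integral>x. (phin n x - p x)\<^sup>2 \<partial>M) \<longlonglongrightarrow> 0"
    and l2: "(\<lambda>n. \<integral>x. (norm (dphin n x - gp x))\<^sup>2 \<partial>M) \<longlonglongrightarrow> 0"
    and pnn: "AE x in M. p x \<ge> 0"
    unfolding Kset_def H10_def M_def by blast
  have cphin: "continuous_on UNIV (phin n)" for n
  proof -
    have "\<And>x. (phin n has_derivative (\<lambda>v. dphin n x \<bullet> v)) (at x)" using C[of n] unfolding C1c_def by blast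
    then show ?thesis by (intro continuous_at_imp_continuous_on ballI has_derivative_continuous)
  qed
  have cdphin: "continuous_on UNIV (dphin n)" for n using C[of n] unfolding C1c_def by blast
  have "\<forall>n. \<exists>B. \<forall>x\<in>closure \<Omega>. norm (phin n x) \<le> B"
    using cont_bdd[OF continuous_on_subset[OF cphin] bd] by blast
  then obtain Bp where Bp0: "\<forall>n. \<forall>x\<in>closure \<Omega>. norm (phin n x) \<le> Bp n"
    using choice[of "\<lambda>n B. \<forall>x\<in>closure \<Omega>. norm (phin n x) \<le> B"] by blast
  have Bp: "\<And>n x. x \<in> closure \<Omega> \<Longrightarrow> norm (phin n x) \<le> Bp n" using Bp0 by blast
  have "\<forall>n. \<exists>B. \<forall>x\<in>closure \<Omega>. norm (dphin n x) \<le> B"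
    using cont_bdd[OF continuous_on_subset[OF cdphin] bd] by blast
  then obtain Bd where Bd0: "\<forall>n. \<forall>x\<in>closure \<Omega>. norm (dphin n x) \<le> Bd n"
    using choice[of "\<lambda>n B. \<forall>x\<in>closure \<Omega>. norm (dphin n x) \<le> B"] by blast
  have Bd: "\<And>n x. x \<in> closure \<Omega> \<Longrightarrow> norm (dphin n x) \<le> Bd n" using Bd0 by blast
  have Bp': "norm (phin n x) \<le> Bp n" if "x \<in> space M" for n x using Bp that sp closure_subset[of \<Omega>] by blast
  have Bd': "norm (dphin n x) \<le> Bd n" if "x \<in> space M" for n x using Bd that sp closure_subset[of \<Omega>] by blast
  have Bd1: "\<bar>dphin n x $ 1\<bar> \<le> Bd n" if "x \<in> space M" for n x
    by (rule order_trans[OF component_le_norm_cart Bd'[OF that]])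
  have phim: "phin n \<in> borel_measurable M" for n unfolding M_def
    by (rule continuous_imp_measurable_on_sets_lebesgue[OF continuous_on_subset[OF cphin] Om]) simp
  have dphim: "dphin n \<in> borel_measurable M" for n unfolding M_def
    by (rule continuous_imp_measurable_on_sets_lebesgue[OF continuous_on_subset[OF cdphin] Om]) simp
  have dphim1: "(\<lambda>x. dphin n x $ 1) \<in> borel_measurable M" for n unfolding M_def
    by (rule continuous_imp_measurable_on_sets_lebesgue[OF _ Om]) (intro continuous_intros continuous_on_subset[OF cdphin], simp)
  have gm1: "(\<lambda>x. gp x $ 1) \<in> borel_measurable M"
    using gm by (simp add: cart_eq_inner_axis)
  have g1i2: "integrable M (\<lambda>x. (gp x $ 1)\<^sup>2)"
  proof (rule Bochner_Integration.integrable_bound[OF gi2])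
    show "(\<lambda>x. (gp x $ 1)\<^sup>2) \<in> borel_measurable M" using gm1 by simp
    show "AE x in M. norm ((gp x $ 1)\<^sup>2) \<le> norm ((norm (gp x))\<^sup>2)"
    proof (intro AE_I2)
      fix x
      have "\<bar>gp x $ 1\<bar> \<le> \<bar>norm (gp x)\<bar>" using component_le_norm_cart[of "gp x" 1] by simp
      then have "(gp x $ 1)\<^sup>2 \<le> (norm (gp x))\<^sup>2" by (simp only: abs_le_square_iff)
      then show "norm ((gp x $ 1)\<^sup>2) \<le> norm ((norm (gp x))\<^sup>2)" by simp
    qed
  qed
  have A: "(\<lambda>n. \<integral>x. h0 x * (dphin n x $ 1) \<partial>M) \<longlonglongrightarrow> (\<integral>x. h0 x * (gp x $ 1) \<partial>M)"
  proof (rule L2lim[OF fm hm hB gm1 g1i2 dphim1])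
    show "integrable M (\<lambda>x. (norm (dphin n x - gp x))\<^sup>2)" for n
      by (rule diff_sq_int[OF fm dphim Bd' gm gi2])
    show "(dphin n x $ 1 - gp x $ 1)\<^sup>2 \<le> (norm (dphin n x - gp x))\<^sup>2" if "x \<in> space M" for n x
    proof -
      have "\<bar>(dphin n x - gp x) $ 1\<bar> \<le> \<bar>norm (dphin n x - gp x)\<bar>"
        using component_le_norm_cart[of "dphin n x - gp x" 1] by simp
      then have "((dphin n x - gp x) $ 1)\<^sup>2 \<le> (norm (dphin n x - gp x))\<^sup>2" by (simp only: abs_le_square_iff)
      then show ?thesis by simp
    qed
  qed (use l2 in auto)
  have B: "(\<lambda>n. \<integral>x. Dh0 x $ 1 * phin n x \<partial>M) \<longlonglongrightarrow> (\<integral>x. Dh0 x $ 1 * p x \<partial>M)"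
  proof (rule L2lim[OF fm Dm DB pm pi2 phim])
    show "integrable M (\<lambda>x. (phin n x - p x)\<^sup>2)" for n
      using diff_sq_int[OF fm phim Bp' pm] pi2 by simp
  qed (auto intro: l1)
  have sum0: "(\<integral>x. h0 x * (dphin n x $ 1) \<partial>M) + (\<integral>x. Dh0 x $ 1 * phin n x \<partial>M) = 0" for n
  proof -
    have sq1: "(dphin n x $ 1)\<^sup>2 \<le> (Bd n)\<^sup>2" if x: "x \<in> space M" for x
    proof -
      have "\<bar>dphin n x $ 1\<bar> \<le> Bd n" by (rule Bd1[OF x])
      from power_mono[OF this abs_ge_zero, of 2] show ?thesis by simp
    qed
    have sq2: "(phin n x)\<^sup>2 \<le> (Bp n)\<^sup>2" if x: "x \<in> space M" for x
    proof -
      have "\<bar>phin n x\<bar> \<le> Bp n" using Bp'[OF x] by simp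
      from power_mono[OF this abs_ge_zero, of 2] show ?thesis by simp
    qed
    have i1: "integrable M (\<lambda>x. h0 x * (dphin n x $ 1))"
      by (rule prod_int[OF fm hm hB dphim1 finite_measure.integrable_const[OF fm, of "(Bd n)\<^sup>2"] sq1])
    have i2: "integrable M (\<lambda>x. Dh0 x $ 1 * phin n x)"
      by (rule prod_int[OF fm Dm DB phim finite_measure.integrable_const[OF fm, of "(Bp n)\<^sup>2"] sq2])
    have "integral\<^sup>L M (\<lambda>x. h0 x * dphin n x $ 1 + Dh0 x $ 1 * phin n x) = 0"
      unfolding M_def by (rule ibp_omega[OF op C dh ch' cD'])
    then show ?thesis using i1 i2 by simp
  qed
  have "(\<lambda>n. (\<integral>x. h0 x * (dphin n x $ 1) \<partial>M) + (\<integral>x. Dh0 x $ 1 * phin n x \<partial>M))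
        \<longlonglongrightarrow> (\<integral>x. h0 x * (gp x $ 1) \<partial>M) + (\<integral>x. Dh0 x $ 1 * p x \<partial>M)"
    by (rule tendsto_add[OF A B])
  then have eq: "(\<integral>x. h0 x * (gp x $ 1) \<partial>M) = - (\<integral>x. Dh0 x $ 1 * p x \<partial>M)"
    using sum0 LIMSEQ_unique[OF _ tendsto_const] by (simp add: eq_neg_iff_add_eq_0)
  have pint: "integrable M p" by (rule sq_int[OF fm pm pi2]) simp
  have Dpint: "integrable M (\<lambda>x. Dh0 x $ 1 * p x)" by (rule prod_int[OF fm Dm DB pm pi2]) auto
  have "- (\<integral>x. Dh0 x $ 1 * p x \<partial>M) = (\<integral>x. - (Dh0 x $ 1) * p x \<partial>M)" by simp
  also have "\<dots> \<le> (\<integral>x. \<gamma> * p x \<partial>M)"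
  proof (rule integral_mono_AE)
    show "integrable M (\<lambda>x. - Dh0 x $ 1 * p x)" using Dpint by simp
    show "integrable M (\<lambda>x. \<gamma> * p x)" using pint by simp
    show "AE x in M. - Dh0 x $ 1 * p x \<le> \<gamma> * p x"
      using pnn AE_space
    proof eventually_elim
      case (elim x)
      have g: "- (Dh0 x $ 1) \<le> \<gamma>" using gam sp elim by auto
      show ?case using mult_right_mono[OF g elim(1)] by simp
    qed
  qed
  also have "\<dots> = \<gamma> * (\<integral>x. p x \<partial>M)" by simp
  finally show ?thesis using eq by (simp add: M_def)
qed




lemma Kset0: "Kset \<Omega> (\<lambda>_. 0) (\<lambda>_. 0)"
proof -
  have d: "((\<lambda>_. 0::real) has_derivative (\<lambda>v. (0::real^2) \<bullet> v)) (at x)" for x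
    by (rule has_derivative_eq_rhs[OF has_derivative_const]) auto
  have C: "C1c (\<lambda>_. 0) (\<lambda>_. 0) \<Omega>" unfolding C1c_def by (intro conjI allI d) auto
  show ?thesis unfolding Kset_def H10_def
    by (intro conjI exI[of _ "\<lambda>_ _. 0"] allI C) auto
qed

lemma Gval:
  fixes \<Omega> :: "(real^2) set" and h0 :: "real^2 \<Rightarrow> real" and Dh0 :: "real^2 \<Rightarrow> real^2"
  assumes op: "open \<Omega>" and bd: "bounded \<Omega>"
    and ch: "continuous_on (closure \<Omega>) h0" and cD: "continuous_on (closure \<Omega>) Dh0"
    and dh: "\<forall>x\<in>\<Omega>. (h0 has_derivative (\<lambda>v. Dh0 x \<bullet> v)) (at x)"
    and hnn: "\<forall>x\<in>closure \<Omega>. h0 x \<ge> 0"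
    and gam: "\<forall>x\<in>\<Omega>. - (Dh0 x $ 1) \<le> \<gamma>" and g0: "\<gamma> > 0" and b0: "\<beta> > 0"
  shows "Gfun \<Omega> h0 F \<beta> \<gamma> = - F"
proof -
  define M where "M = lebesgue_on \<Omega>"
  have Om: "\<Omega> \<in> sets lebesgue" using op by (simp add: borel_open sets_completionI_sets)
  have fm: "finite_measure M" unfolding M_def
    by (rule finite_measure_lebesgue_on[OF bounded_set_imp_lmeasurable[OF bd Om]])
  have sp: "space M = \<Omega>" by (simp add: M_def)
  have sol0: "vi_sol \<Omega> h0 \<beta> \<gamma> (\<lambda>_. 0) (\<lambda>_. 0)"
    unfolding vi_sol_def
  proof (intro conjI allI impI Kset0)
    fix phi gphi assume K: "Kset \<Omega> phi gphi"
    have "(\<integral>x. h0 x * (gphi x $ 1) \<partial>lebesgue_on \<Omega>) \<le> \<gamma> * (\<integral>x. phi x \<partial>lebesgue_on \<Omega>)"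
      by (rule keyL[OF op bd ch cD dh gam K])
    then show "(\<integral>x. h0 x * ((gphi x - 0) $ 1) \<partial>lebesgue_on \<Omega>) - \<gamma> * (\<integral>x. phi x - 0 \<partial>lebesgue_on \<Omega>)
        \<le> (\<integral>x. (h0 x + \<beta>) ^ 3 * (0 \<bullet> (gphi x - 0)) \<partial>lebesgue_on \<Omega>)" by simp
  qed
  have uniq: "(\<integral>x. q x \<partial>lebesgue_on \<Omega>) = 0" if sol: "vi_sol \<Omega> h0 \<beta> \<gamma> q gq" for q gq
  proof -
    have Kq: "Kset \<Omega> q gq" and vi: "\<And>phi gphi. Kset \<Omega> phi gphi \<Longrightarrow>
        (\<integral>x. (h0 x + \<beta>) ^ 3 * (gq x \<bullet> (gphi x - gq x)) \<partial>M)
        \<ge> (\<integral>x. h0 x * ((gphi x - gq x) $ 1) \<partial>M) - \<gamma> * (\<integral>x. phi x - q x \<partial>M)"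
      using sol unfolding vi_sol_def M_def by blast+
    from Kq have gi2: "integrable M (\<lambda>x. (norm (gq x))\<^sup>2)" and gm: "gq \<in> borel_measurable M"
      and qm: "q \<in> borel_measurable M" and qnn: "AE x in M. q x \<ge> 0"
      unfolding Kset_def H10_def M_def by blast+
    have key: "(\<integral>x. h0 x * (gq x $ 1) \<partial>M) \<le> \<gamma> * (\<integral>x. q x \<partial>M)"
      unfolding M_def by (rule keyL[OF op bd ch cD dh gam Kq])
    have "(\<integral>x. (h0 x + \<beta>) ^ 3 * (gq x \<bullet> ((\<lambda>_. 0) x - gq x)) \<partial>M)
        \<ge> (\<integral>x. h0 x * (((\<lambda>_. 0) x - gq x) $ 1) \<partial>M) - \<gamma> * (\<integral>x. (\<lambda>_. 0) x - q x \<partial>M)"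
      by (rule vi[OF Kset0])
    then have ineq: "- (\<integral>x. (h0 x + \<beta>) ^ 3 * (norm (gq x))\<^sup>2 \<partial>M)
        \<ge> - (\<integral>x. h0 x * (gq x $ 1) \<partial>M) + \<gamma> * (\<integral>x. q x \<partial>M)"
      by (simp add: power2_norm_eq_inner)
    obtain Bh where Bh: "\<forall>x\<in>closure \<Omega>. norm (h0 x) \<le> Bh" using cont_bdd[OF ch bd] by blast
    have ch': "continuous_on \<Omega> h0" using ch continuous_on_subset closure_subset[of \<Omega>] by blast
    have hm: "h0 \<in> borel_measurable M" unfolding M_def by (rule continuous_imp_measurable_on_sets_lebesgue[OF ch' Om])
    have wnn: "(h0 x + \<beta>) ^ 3 > 0" if "x \<in> \<Omega>" for x
    proof -
      have "0 < h0 x + \<beta>" using hnn that closure_subset[of \<Omega>] b0 by force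
      then show ?thesis by simp
    qed
    have wint: "integrable M (\<lambda>x. (h0 x + \<beta>) ^ 3 * (norm (gq x))\<^sup>2)"
    proof (rule Bochner_Integration.integrable_bound[where f="\<lambda>x. (Bh + \<beta>) ^ 3 * (norm (gq x))\<^sup>2"])
      show "integrable M (\<lambda>x. (Bh + \<beta>) ^ 3 * (norm (gq x))\<^sup>2)" using gi2 by simp
      show "(\<lambda>x. (h0 x + \<beta>) ^ 3 * (norm (gq x))\<^sup>2) \<in> borel_measurable M" using hm gm by simp
      show "AE x in M. norm ((h0 x + \<beta>) ^ 3 * (norm (gq x))\<^sup>2) \<le> norm ((Bh + \<beta>) ^ 3 * (norm (gq x))\<^sup>2)"
      proof (intro AE_I2)
        fix x assume "x \<in> space M"
        then have x: "x \<in> \<Omega>" by (simp add: sp)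
        have a: "0 \<le> h0 x + \<beta>" using hnn x closure_subset[of \<Omega>] b0 by force
        have b: "h0 x + \<beta> \<le> Bh + \<beta>" using Bh x closure_subset[of \<Omega>] by force
        have "(h0 x + \<beta>) ^ 3 \<le> (Bh + \<beta>) ^ 3" by (rule power_mono[OF b a])
        then show "norm ((h0 x + \<beta>) ^ 3 * (norm (gq x))\<^sup>2) \<le> norm ((Bh + \<beta>) ^ 3 * (norm (gq x))\<^sup>2)"
          using wnn[OF x] by (simp add: abs_mult mult_right_mono)
      qed
    qed
    have wnn': "AE x in M. 0 \<le> (h0 x + \<beta>) ^ 3 * (norm (gq x))\<^sup>2"
    proof (intro AE_I2)
      fix x assume "x \<in> space M"
      then have "(h0 x + \<beta>) ^ 3 > 0" using wnn sp by simp
      then show "0 \<le> (h0 x + \<beta>) ^ 3 * (norm (gq x))\<^sup>2" by (intro mult_nonneg_nonneg) auto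
    qed
    have I0: "0 \<le> (\<integral>x. (h0 x + \<beta>) ^ 3 * (norm (gq x))\<^sup>2 \<partial>M)" by (rule integral_nonneg_AE[OF wnn'])
    have "(\<integral>x. (h0 x + \<beta>) ^ 3 * (norm (gq x))\<^sup>2 \<partial>M) = 0" using ineq key I0 by linarith
    then have "AE x in M. (h0 x + \<beta>) ^ 3 * (norm (gq x))\<^sup>2 = 0"
      using integral_nonneg_eq_0_iff_AE[OF wint wnn'] by simp
    then have gq0: "AE x in M. gq x = 0"
      using AE_space
    proof eventually_elim
      case (elim x)
      then have "(h0 x + \<beta>) ^ 3 > 0" using wnn sp by simp
      then show ?case using elim by simp
    qed
    have "(\<integral>x. h0 x * (gq x $ 1) \<partial>M) = (\<integral>x. 0 \<partial>M)"
      by (rule integral_cong_AE) (use hm gm gq0 in \<open>auto simp: cart_eq_inner_axis elim: AE_mp\<close>)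
    then have "(\<integral>x. h0 x * (gq x $ 1) \<partial>M) = 0" by simp
    then have "\<gamma> * (\<integral>x. q x \<partial>M) \<le> 0" using ineq I0 by linarith
    then have "(\<integral>x. q x \<partial>M) \<le> 0" using g0 by (simp add: mult_le_0_iff)
    moreover have "0 \<le> (\<integral>x. q x \<partial>M)" by (rule integral_nonneg_AE[OF qnn])
    ultimately show ?thesis by (simp add: M_def)
  qed
  show ?thesis unfolding Gfun_def
  proof (rule the_equality)
    show "\<exists>q gq. vi_sol \<Omega> h0 \<beta> \<gamma> q gq \<and> - F = (\<integral>x. q x \<partial>lebesgue_on \<Omega>) - F"
      using sol0 by auto
  next
    fix v assume "\<exists>q gq. vi_sol \<Omega> h0 \<beta> \<gamma> q gq \<and> v = (\<integral>x. q x \<partial>lebesgue_on \<Omega>) - F"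
    then show "v = - F" using uniq by auto
  qed
qed




theorem proposition4p1:
  fixes \<Omega> :: "(real^2) set" and h0 :: "real^2 \<Rightarrow> real" and Dh0 :: "real^2 \<Rightarrow> real^2"
    and F eta0 eta1 :: real and T :: ereal and eta d1 d2 :: "real \<Rightarrow> real"
  assumes "open \<Omega>" and "bounded \<Omega>" and "regular_boundary \<Omega>" and "0 \<in> \<Omega>"
    and "continuous_on (closure \<Omega>) h0" and "continuous_on (closure \<Omega>) Dh0"
    and "\<forall>x\<in>\<Omega>. (h0 has_derivative (\<lambda>v. Dh0 x \<bullet> v)) (at x)"
    and "\<forall>x\<in>closure \<Omega>. h0 x \<ge> 0" and "h0 0 = 0"
    and "F > 0"
    and "caseI \<Omega> h0 \<or> caseII \<Omega> h0"
    and "eta0 > 0"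
    and "maximal_ode_sol (Gfun \<Omega> h0 F) eta0 eta1 T eta d1 d2"
  shows "\<forall>t\<in>Ival T. d1 t < max (eta1 + 1) (SUP x\<in>\<Omega>. - (Dh0 x $ 1))"
proof -
  note op = assms(1) and bd = assms(2) and O0 = assms(4) and ch = assms(5) and cD = assms(6)
    and dh = assms(7) and hnn = assms(8) and h00 = assms(9) and F0 = assms(10) and cases = assms(11)
  obtain BD where BD: "\<forall>x\<in>closure \<Omega>. norm (Dh0 x) \<le> BD" using cont_bdd[OF cD bd] by blast
  define V1 where "V1 = (SUP x\<in>\<Omega>. - (Dh0 x $ 1))"
  have bdd: "bdd_above ((\<lambda>x. - (Dh0 x $ 1)) ` \<Omega>)"
  proof (rule bdd_aboveI2)
    fix x assume "x \<in> \<Omega>"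
    then have "norm (Dh0 x) \<le> BD" using BD closure_subset[of \<Omega>] by blast
    moreover have "\<bar>Dh0 x $ 1\<bar> \<le> norm (Dh0 x)" by (rule component_le_norm_cart)
    ultimately show "- (Dh0 x $ 1) \<le> BD" by linarith
  qed
  have V1u: "- (Dh0 x $ 1) \<le> V1" if "x \<in> \<Omega>" for x
    unfolding V1_def by (rule cSUP_upper[OF that bdd])
  define e1 :: "real^2" where "e1 = axis 1 1"
  have V1pos: "V1 > 0"
  proof -
    obtain r where r: "r > 0" "ball 0 r \<subseteq> \<Omega>" using op O0 open_contains_ball by blast
    define s where "s = r / 2"
    have s: "0 < s" "s < r" using r by (auto simp: s_def)
    have ne1: "norm e1 = 1" by (simp add: e1_def)
    have inO: "t *\<^sub>R e1 \<in> \<Omega>" if "\<bar>t\<bar> \<le> s" for t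
      using that s r ne1 by (auto simp: subset_iff)
    have x1: "((- s) *\<^sub>R e1) $ 1 = - s" by (simp add: e1_def)
    have xne: "(- s) *\<^sub>R e1 \<noteq> 0"
    proof
      assume "(- s) *\<^sub>R e1 = 0"
      then have "((- s) *\<^sub>R e1) $ 1 = (0::real^2) $ 1" by (rule arg_cong[where f="\<lambda>v. v $ 1"])
      then show False using x1 s by simp
    qed
    have xc: "(- s) *\<^sub>R e1 \<in> closure \<Omega>" using inO[of "- s"] s closure_subset[of \<Omega>] by auto
    have hx0: "h0 ((- s) *\<^sub>R e1) > 0"
      using cases
    proof (elim disjE)
      assume "caseI \<Omega> h0" then show ?thesis using x1 xc s unfolding caseI_def by force
    next
      assume "caseII \<Omega> h0" then show ?thesis using xne xc unfolding caseII_def by blast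
    qed
    have "\<exists>z. - s < z \<and> z < 0 \<and> h0 (0 *\<^sub>R e1) - h0 ((- s) *\<^sub>R e1) = (0 - - s) * (Dh0 (z *\<^sub>R e1) $ 1)"
    proof (rule MVT2[where f="\<lambda>t. h0 (t *\<^sub>R e1)"])
      fix t :: real assume t: "- s \<le> t" "t \<le> 0"
      then have tO: "t *\<^sub>R e1 \<in> \<Omega>" using inO by auto
      have a: "((\<lambda>t. t *\<^sub>R e1) has_derivative (\<lambda>u. u *\<^sub>R e1)) (at t)"
        by (auto intro!: derivative_eq_intros)
      from has_derivative_compose[OF a dh[rule_format, OF tO]]
      have "((\<lambda>t. h0 (t *\<^sub>R e1)) has_derivative (\<lambda>u. Dh0 (t *\<^sub>R e1) \<bullet> (u *\<^sub>R e1))) (at t)"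
        by (simp add: o_def)
      then show "((\<lambda>t. h0 (t *\<^sub>R e1)) has_real_derivative Dh0 (t *\<^sub>R e1) $ 1) (at t)"
        unfolding has_field_derivative_def
        by (rule has_derivative_eq_rhs) (auto simp: e1_def cart_eq_inner_axis fun_eq_iff algebra_simps)
    qed (use s in simp)
    then obtain z where z: "- s < z" "z < 0" "h0 (0 *\<^sub>R e1) - h0 ((- s) *\<^sub>R e1) = s * (Dh0 (z *\<^sub>R e1) $ 1)"
      by auto
    have "s * (Dh0 (z *\<^sub>R e1) $ 1) < 0" using z(3) hx0 h00 by simp
    then have "0 < - (Dh0 (z *\<^sub>R e1) $ 1)" using s by (simp add: mult_less_0_iff)
    also have "\<dots> \<le> V1" by (rule V1u[OF inO]) (use z in auto)
    finally show ?thesis .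
  qed
  from assms(13) have ode: "ode_sol (Gfun \<Omega> h0 F) eta0 eta1 T eta d1 d2"
    unfolding maximal_ode_sol_def by blast
  define I where "I = Ival T"
  have d10: "d1 0 = eta1" and der1: "\<And>t. t \<in> I \<Longrightarrow> (d1 has_real_derivative d2 t) (at t within I)"
    and etapos: "\<And>t. t \<in> I \<Longrightarrow> eta t > 0" and d2eq: "\<And>t. t \<in> I \<Longrightarrow> d2 t = Gfun \<Omega> h0 F (eta t) (d1 t)"
    using ode unfolding ode_sol_def I_def by auto
  define V2 where "V2 = max (eta1 + 1) V1"
  have "\<forall>t\<in>I. d1 t < V2"
  proof (rule ccontr)
    assume "\<not> (\<forall>t\<in>I. d1 t < V2)"
    then obtain t1 where t1: "t1 \<in> I" "V2 \<le> d1 t1" by (auto simp: not_less)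
    have cont: "continuous_on I d1"
      using der1 DERIV_continuous continuous_on_eq_continuous_within by blast
    have sub: "{0..t1} \<subseteq> I"
    proof
      fix t assume t: "t \<in> {0..t1}"
      have "ereal t \<le> ereal t1" using t by simp
      also have "ereal t1 < T" using t1 by (simp add: I_def Ival_def)
      finally show "t \<in> I" using t by (simp add: I_def Ival_def)
    qed
    define S where "S = {0..t1} \<inter> d1 -` {V2..}"
    have clS: "closed S" unfolding S_def
      by (rule continuous_closed_preimage[OF continuous_on_subset[OF cont sub]]) auto
    have t1S: "t1 \<in> S" using t1 sub by (auto simp: S_def I_def Ival_def)
    have bddS: "bdd_below S" by (rule bdd_belowI[of _ 0]) (auto simp: S_def)
    define t0 where "t0 = Inf S"
    have t0S: "t0 \<in> S" unfolding t0_def by (rule closed_contains_Inf) (use t1S bddS clS in auto)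
    then have t0: "0 \<le> t0" "t0 \<le> t1" "V2 \<le> d1 t0" by (auto simp: S_def)
    have "t0 \<noteq> 0" using t0(3) d10 by (auto simp: V2_def)
    then have t0p: "0 < t0" using t0 by simp
    have t0I: "t0 \<in> I" using sub t0 by auto
    have "d2 t0 = - F"
      unfolding d2eq[OF t0I]
    proof (rule Gval[OF op bd ch cD dh hnn])
      show "\<forall>x\<in>\<Omega>. - Dh0 x $ 1 \<le> d1 t0" using V1u t0(3) by (force simp: V2_def)
      show "0 < d1 t0" using V1pos t0(3) by (simp add: V2_def)
      show "0 < eta t0" by (rule etapos[OF t0I])
    qed
    then have "d2 t0 < 0" using F0 by simp
    from has_real_derivative_neg_dec_left[OF der1[OF t0I] this]
    obtain d where d: "d > 0" "\<And>h. h > 0 \<Longrightarrow> t0 - h \<in> I \<Longrightarrow> h < d \<Longrightarrow> d1 t0 < d1 (t0 - h)" by blast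
    define h where "h = min (d / 2) t0"
    have h: "0 < h" "h < d" "h \<le> t0" using d t0p by (auto simp: h_def)
    have "t0 - h \<in> {0..t1}" using h t0 by auto
    then have inI: "t0 - h \<in> I" using sub by auto
    have "d1 t0 < d1 (t0 - h)" by (rule d(2)[OF h(1) inI h(2)])
    then have "t0 - h \<in> S" using t0 \<open>t0 - h \<in> {0..t1}\<close> by (auto simp: S_def)
    then have "t0 \<le> t0 - h" unfolding t0_def by (rule cInf_lower[OF _ bddS])
    then show False using h by simp
  qed
  then show ?thesis by (simp add: I_def V2_def V1_def)
qed


end
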